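(* Let $T$ be a hypertree and let $e_1,e_2$ be edges of $T$. Suppose $u_i,v_i\in e_i$ for $i=1,2$, and $d_T(u_1,u_2)=d_T(v_1,v_2)+2$. For $i=1,2$, let $T_i$ be the component of $T-e_i$ containing $u_i$, and let $A_i=\{w\in V(T): d_T(w,u_i)=d_T(w,v_i)\}$. Let $x=x(T)$. Then: (i) $\rho(T)(x_{u_1}-x_{u_2})-\rho(T)(x_{v_1}-x_{v_2})=2(\sigma_T(T_2)-\sigma_T(T_1))+\sigma_T(A_2)-\sigma_T(A_1)$. (ii) If moreover $e_i\setminus\{u_i,v_i\}=\{w_i\}$ and $\deg_T(w_i)=1$ for $i=1,2$, then $(\rho(T)+1)(x_{w_1}-x_{w_2})-\rho(T)(x_{v_1}-x_{v_2})=x_{w_2}-x_{w_1}+\sigma_T(T_2)-\sigma_T(T_1)$ and $\rho(T)(x_{u_1}-x_{u_2})-(\rho(T)+1)(x_{w_1}-x_{w_2})=\sigma_T(T_2)-\sigma_T(T_1)$.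
   Context: A (simple) hypergraph has edges that are subsets of the vertex set of size at least two. A loose path from $v_0$ to $v_p$ of length $p$ is an alternating sequence $(v_0,e_1,v_1,\dots,e_p,v_p)$ of distinct vertices and distinct edges with $v_{i-1},v_i\in e_i$ and $e_i\cap e_j=\emptyset$ whenever $j>i+1$; loose cycles are defined analogously (closed, with non-consecutive edges disjoint). A hypertree is a connected hypergraph (any two vertices joined by a loose path) with no loose cycle. $d_T(u,v)$ is the length of a shortest loose path from $u$ to $v$; $D(T)=(d_T(u,v))$ is the distance matrix, $\rho(T)$ its largest eigenvalue, and $x(T)$ the unique unit positive eigenvector of $D(T)$ for $\rho(T)$ (distance Perron vector). The degree $\deg_T(w)$ is the number of edges containing $w$. $T-e$ is the hypergraph on $V(T)$ with edge set $E(T)\setminus\{e\}$. For $V_1\subseteq V(T)$, $\sigma_T(V_1)=\sum_{v\in V_1}x_v$ with $x=x(T)$; for a subhypergraph $H$, $\sigma_T(H)=\sigma_T(V(H))$. *)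

theory Defs
  imports Main "HOL-Analysis.Analysis"
begin

definition hypergraph :: "'a set \<Rightarrow> 'a set set \<Rightarrow> bool" where
  "hypergraph V E \<longleftrightarrow> finite V \<and> (\<forall>e\<in>E. e \<subseteq> V \<and> card e \<ge> 2)"

text \<open>Loose path (v_0,e_1,v_1,...,e_p,v_p): vertex list vs of length p+1,
  edge list es of length p; es ! i plays the role of e_(i+1).\<close>
definition loose_path :: "'a set \<Rightarrow> 'a set set \<Rightarrow> 'a list \<Rightarrow> 'a set list \<Rightarrow> bool" where
  "loose_path V E vs es \<longleftrightarrow>
     length vs = Suc (length es) \<and> set vs \<subseteq> V \<and> set es \<subseteq> E \<and>
     distinct vs \<and> distinct es \<and>
     (\<forall>i < length es. vs ! i \<in> es ! i \<and> vs ! Suc i \<in> es ! i) \<and>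
     (\<forall>i < length es. \<forall>j < length es. i + 1 < j \<longrightarrow> es ! i \<inter> es ! j = {})"

definition loose_path_from :: "'a set \<Rightarrow> 'a set set \<Rightarrow> 'a \<Rightarrow> 'a \<Rightarrow> nat \<Rightarrow> bool" where
  "loose_path_from V E u v p \<longleftrightarrow>
     (\<exists>vs es. loose_path V E vs es \<and> hd vs = u \<and> last vs = v \<and> length es = p)"

definition loose_cycle :: "'a set \<Rightarrow> 'a set set \<Rightarrow> 'a list \<Rightarrow> 'a set list \<Rightarrow> bool" where
  "loose_cycle V E vs es \<longleftrightarrow>
     length es \<ge> 2 \<and> length vs = length es \<and> set vs \<subseteq> V \<and> set es \<subseteq> E \<and>
     distinct vs \<and> distinct es \<and>
     (\<forall>i < length es. vs ! i \<in> es ! i \<and> vs ! (Suc i mod length es) \<in> es ! i) \<and>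
     (\<forall>i < length es. \<forall>j < length es.
        i \<noteq> j \<and> Suc i mod length es \<noteq> j \<and> Suc j mod length es \<noteq> i
        \<longrightarrow> es ! i \<inter> es ! j = {})"

definition hconnected :: "'a set \<Rightarrow> 'a set set \<Rightarrow> bool" where
  "hconnected V E \<longleftrightarrow> (\<forall>u\<in>V. \<forall>v\<in>V. \<exists>p. loose_path_from V E u v p)"

definition hypertree :: "'a set \<Rightarrow> 'a set set \<Rightarrow> bool" where
  "hypertree V E \<longleftrightarrow> hypergraph V E \<and> hconnected V E \<and>
     \<not> (\<exists>vs es. loose_cycle V E vs es)"

definition hdist :: "'a set \<Rightarrow> 'a set set \<Rightarrow> 'a \<Rightarrow> 'a \<Rightarrow> nat" where
  "hdist V E u v = (LEAST p. loose_path_from V E u v p)"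

definition dist_eigenpair :: "'a set \<Rightarrow> 'a set set \<Rightarrow> real \<Rightarrow> ('a \<Rightarrow> real) \<Rightarrow> bool" where
  "dist_eigenpair V E lam x \<longleftrightarrow>
     (\<forall>u\<in>V. (\<Sum>v\<in>V. real (hdist V E u v) * x v) = lam * x u)"

definition dist_spectral_radius :: "'a set \<Rightarrow> 'a set set \<Rightarrow> real" where
  "dist_spectral_radius V E =
     Max {lam. \<exists>x. (\<exists>v\<in>V. x v \<noteq> 0) \<and> dist_eigenpair V E lam x}"

definition dist_perron_vector :: "'a set \<Rightarrow> 'a set set \<Rightarrow> ('a \<Rightarrow> real) \<Rightarrow> bool" where
  "dist_perron_vector V E x \<longleftrightarrow>
     (\<forall>v\<in>V. x v > 0) \<and> (\<Sum>v\<in>V. (x v)\<^sup>2) = 1 \<and>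
     dist_eigenpair V E (dist_spectral_radius V E) x"

definition hdeg :: "'a set set \<Rightarrow> 'a \<Rightarrow> nat" where
  "hdeg E w = card {e\<in>E. w \<in> e}"

definition comp_minus_edge :: "'a set \<Rightarrow> 'a set set \<Rightarrow> 'a set \<Rightarrow> 'a \<Rightarrow> 'a set" where
  "comp_minus_edge V E e u = {w\<in>V. \<exists>p. loose_path_from V (E - {e}) u w p}"

definition sigma :: "('a \<Rightarrow> real) \<Rightarrow> 'a set \<Rightarrow> real" where
  "sigma x S = (\<Sum>v\<in>S. x v)"

end

theory Submission
  imports Defs
begin

definition walk :: "'a set set \<Rightarrow> nat \<Rightarrow> (nat \<Rightarrow> 'a) \<Rightarrow> (nat \<Rightarrow> 'a set) \<Rightarrow> bool" where
  "walk F n g h \<longleftrightarrow> (\<forall>i<n. h i \<in> F \<and> g i \<in> h i \<and> g (Suc i) \<in> h i)"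

definition reach :: "'a set set \<Rightarrow> 'a \<Rightarrow> 'a \<Rightarrow> nat \<Rightarrow> bool" where
  "reach F u w n \<longleftrightarrow> (\<exists>g h. walk F n g h \<and> g 0 = u \<and> g n = w)"

lemma reach_0: "reach F u u 0"
  unfolding reach_def walk_def by auto

lemma reach_0_iff: "reach F u w 0 \<longleftrightarrow> u = w"
  unfolding reach_def walk_def by auto

lemma reach_edge: "f \<in> F \<Longrightarrow> x \<in> f \<Longrightarrow> y \<in> f \<Longrightarrow> reach F x y 1"
  unfolding reach_def walk_def
  by (rule exI[of _ "\<lambda>k. if k = 0 then x else y"], rule exI[of _ "\<lambda>k. f"]) auto

lemma reach_trans:
  assumes "reach F u v n" "reach F v w m"
  shows "reach F u w (n + m)"
proof -
  obtain g h where g: "walk F n g h" "g 0 = u" "g n = v" using assms(1) unfolding reach_def by blast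
  obtain g' h' where g': "walk F m g' h'" "g' 0 = v" "g' m = w" using assms(2) unfolding reach_def by blast
  let ?g = "\<lambda>k. if k \<le> n then g k else g' (k - n)"
  let ?h = "\<lambda>k. if k < n then h k else h' (k - n)"
  have "walk F (n + m) ?g ?h"
    unfolding walk_def
  proof (intro allI impI)
    fix i assume i: "i < n + m"
    show "?h i \<in> F \<and> ?g i \<in> ?h i \<and> ?g (Suc i) \<in> ?h i"
    proof (cases "i < n")
      case True
      then show ?thesis using g(1) unfolding walk_def by auto
    next
      case False
      then have "i - n < m" using i by auto
      then have "h' (i - n) \<in> F \<and> g' (i - n) \<in> h' (i - n) \<and> g' (Suc (i - n)) \<in> h' (i - n)"
        using g'(1) unfolding walk_def by blast
      moreover have "Suc i - n = Suc (i - n)" using False by auto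
      ultimately show ?thesis using False g(3) g'(2) by (auto simp: not_less)
    qed
  qed
  moreover have "?g 0 = u" "?g (n + m) = w" using g g' by auto
  ultimately show ?thesis unfolding reach_def by blast
qed

lemma reach_rev:
  assumes "reach F u w n"
  shows "reach F w u n"
proof -
  obtain g h where g: "walk F n g h" "g 0 = u" "g n = w" using assms unfolding reach_def by blast
  have "walk F n (\<lambda>k. g (n - k)) (\<lambda>k. h (n - Suc k))"
    unfolding walk_def
  proof (intro allI impI)
    fix i assume i: "i < n"
    then have "h (n - Suc i) \<in> F \<and> g (n - Suc i) \<in> h (n - Suc i) \<and> g (Suc (n - Suc i)) \<in> h (n - Suc i)"
      using g(1) unfolding walk_def by auto
    moreover have "Suc (n - Suc i) = n - i" using i by auto
    ultimately show "h (n - Suc i) \<in> F \<and> g (n - i) \<in> h (n - Suc i) \<and> g (n - Suc i) \<in> h (n - Suc i)"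
      by auto
  qed
  then show ?thesis unfolding reach_def using g by auto
qed

lemma reach_mono: "F \<subseteq> G \<Longrightarrow> reach F u w n \<Longrightarrow> reach G u w n"
  unfolding reach_def walk_def by blast

lemma walk_sub:
  assumes "walk F n g h" "i \<le> j" "j \<le> n"
  shows "reach F (g i) (g j) (j - i)"
proof -
  have "walk F (j - i) (\<lambda>k. g (i + k)) (\<lambda>k. h (i + k))"
    using assms unfolding walk_def by auto
  then show ?thesis unfolding reach_def using assms(2) by (intro exI[of _ "\<lambda>k. g (i + k)"] exI) auto
qed

lemma reach_Suc:
  assumes "reach F u w (Suc n)"
  shows "\<exists>f y. f \<in> F \<and> u \<in> f \<and> y \<in> f \<and> reach F y w n"
proof -
  obtain g h where g: "walk F (Suc n) g h" "g 0 = u" "g (Suc n) = w" using assms unfolding reach_def by blast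
  have "reach F (g 1) (g (Suc n)) (Suc n - 1)" by (rule walk_sub[OF g(1)]) auto
  moreover have "h 0 \<in> F \<and> g 0 \<in> h 0 \<and> g 1 \<in> h 0" using g(1) unfolding walk_def by auto
  ultimately show ?thesis using g by auto
qed

lemma shortcut:
  assumes "walk F n g h" "i \<le> j" "j \<le> n" "reach F (g i) (g j) m"
  shows "reach F (g 0) (g n) (i + m + (n - j))"
proof -
  have "reach F (g 0) (g i) (i - 0)" by (rule walk_sub[OF assms(1)]) (use assms in auto)
  moreover have "reach F (g j) (g n) (n - j)" by (rule walk_sub[OF assms(1)]) (use assms in auto)
  ultimately show ?thesis using reach_trans[OF reach_trans[OF _ assms(4)]] by fastforce
qed

lemma loose_imp_reach:
  assumes "loose_path_from V F u w p"
  shows "reach F u w p"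
proof -
  obtain vs es where l: "loose_path V F vs es" "hd vs = u" "last vs = w" "length es = p"
    using assms unfolding loose_path_from_def by blast
  have len: "length vs = Suc p" using l unfolding loose_path_def by auto
  have "walk F p ((!) vs) ((!) es)"
    using l unfolding loose_path_def walk_def by (auto simp: nth_mem subsetD)
  moreover have "vs ! 0 = u" using l(2) len by (cases vs) auto
  moreover have "vs ! p = w" using l(3) len by (metis diff_Suc_1 last_conv_nth list.size(3) nat.distinct(1))
  ultimately show ?thesis unfolding reach_def by blast
qed

lemma reach_imp_loose:
  assumes hg: "hypergraph V E" and FE: "F \<subseteq> E" and u: "u \<in> V" and r: "reach F u w n"
  shows "\<exists>p\<le>n. loose_path_from V F u w p"
proof -
  define n0 where "n0 = (LEAST n. reach F u w n)"
  have r0: "reach F u w n0" unfolding n0_def by (rule LeastI[of _ n], rule r)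
  have le: "n0 \<le> n" unfolding n0_def by (rule Least_le, rule r)
  have min: "\<not> reach F u w m" if "m < n0" for m
    using not_less_Least[of m "\<lambda>n. reach F u w n"] that unfolding n0_def by blast
  obtain g h where g: "walk F n0 g h" "g 0 = u" "g n0 = w" using r0 unfolding reach_def by blast
  have hF: "h i \<in> F" "g i \<in> h i" "g (Suc i) \<in> h i" if "i < n0" for i
    using g(1) that unfolding walk_def by auto
  have EV: "f \<subseteq> V" if "f \<in> F" for f using hg FE that unfolding hypergraph_def by auto
  define vs where "vs = map g [0..<Suc n0]"
  define es where "es = map h [0..<n0]"
  have injg: "inj_on g {0..<Suc n0}"
  proof (rule inj_onI, rule ccontr)
    fix i j assume ij: "i \<in> {0..<Suc n0}" "j \<in> {0..<Suc n0}" "g i = g j" "i \<noteq> j"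
    have "\<exists>a b. a < b \<and> b \<le> n0 \<and> g a = g b" using ij
      by (metis atLeastLessThan_iff less_Suc_eq_le linorder_neqE_nat)
    then obtain a b where ab: "a < b" "b \<le> n0" "g a = g b" by blast
    have "reach F (g a) (g b) 0" using ab by (simp add: reach_0_iff)
    from shortcut[OF g(1) _ ab(2) this] ab have "reach F u w (a + 0 + (n0 - b))" using g by simp
    moreover have "a + 0 + (n0 - b) < n0" using ab by auto
    ultimately show False using min by blast
  qed
  have injh: "inj_on h {0..<n0}"
  proof (rule inj_onI, rule ccontr)
    fix i j assume ij: "i \<in> {0..<n0}" "j \<in> {0..<n0}" "h i = h j" "i \<noteq> j"
    have "\<exists>a b. a < b \<and> b < n0 \<and> h a = h b" using ij
      by (metis atLeastLessThan_iff linorder_neqE_nat)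
    then obtain a b where ab: "a < b" "b < n0" "h a = h b" by blast
    have "reach F (g a) (g (Suc b)) 1"
      using hF[of a] hF[of b] ab by (intro reach_edge[of "h b"]) auto
    from shortcut[OF g(1) _ _ this] ab have "reach F u w (a + 1 + (n0 - Suc b))" using g by simp
    moreover have "a + 1 + (n0 - Suc b) < n0" using ab by auto
    ultimately show False using min by blast
  qed
  have disj: "h i \<inter> h j = {}" if "i < n0" "j < n0" "i + 1 < j" for i j
  proof (rule ccontr)
    assume "h i \<inter> h j \<noteq> {}"
    then obtain y where y: "y \<in> h i" "y \<in> h j" by blast
    have "reach F (g i) y 1" using hF[of i] that y by (intro reach_edge[of "h i"]) auto
    moreover have "reach F y (g (Suc j)) 1" using hF[of j] that y by (intro reach_edge[of "h j"]) auto
    ultimately have "reach F (g i) (g (Suc j)) (1 + 1)" by (rule reach_trans)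
    from shortcut[OF g(1) _ _ this] that have "reach F u w (i + (1 + 1) + (n0 - Suc j))" using g by simp
    moreover have "i + (1 + 1) + (n0 - Suc j) < n0" using that by auto
    ultimately show False using min by blast
  qed
  have gV: "g k \<in> V" if "k \<le> n0" for k
  proof (cases "k < n0")
    case True then show ?thesis using hF EV by blast
  next
    case False
    then have k: "k = n0" using that by auto
    show ?thesis
    proof (cases n0)
      case 0 then show ?thesis using k g(2) u by simp
    next
      case (Suc n1)
      then show ?thesis using hF[of n1] EV k by auto
    qed
  qed
  have "loose_path V F vs es"
    unfolding loose_path_def vs_def es_def
  proof (intro conjI)
    show "set (map g [0..<Suc n0]) \<subseteq> V" using gV by auto
    show "set (map h [0..<n0]) \<subseteq> F" using hF by auto
    show "distinct (map g [0..<Suc n0])" using injg by (simp del: upt_Suc add: distinct_map)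
    show "distinct (map h [0..<n0])" using injh by (simp add: distinct_map)
    show "\<forall>i<length (map h [0..<n0]). map g [0..<Suc n0] ! i \<in> map h [0..<n0] ! i \<and>
        map g [0..<Suc n0] ! Suc i \<in> map h [0..<n0] ! i"
      using hF by (auto simp del: upt_Suc simp add: nth_map_upt)
    show "\<forall>i<length (map h [0..<n0]). \<forall>j<length (map h [0..<n0]).
        i + 1 < j \<longrightarrow> map h [0..<n0] ! i \<inter> map h [0..<n0] ! j = {}"
      using disj by auto
  qed simp
  moreover have "hd vs = u" "last vs = w" "length es = n0"
    unfolding vs_def es_def using g by (auto simp del: upt_Suc simp add: hd_map last_map)
  ultimately show ?thesis using le unfolding loose_path_from_def by blast
qed

lemma hdist_eq:
  assumes hg: "hypergraph V E" and FE: "F \<subseteq> E" and u: "u \<in> V" and r: "reach F u w n"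
  shows "hdist V F u w = (LEAST n. reach F u w n)"
proof -
  define n0 where "n0 = (LEAST n. reach F u w n)"
  have r0: "reach F u w n0" unfolding n0_def by (rule LeastI[of _ n], rule r)
  obtain p where p: "p \<le> n0" "loose_path_from V F u w p" using reach_imp_loose[OF hg FE u r0] by blast
  have "n0 \<le> p" unfolding n0_def by (rule Least_le, rule loose_imp_reach[OF p(2)])
  then have pn: "p = n0" using p by simp
  have "(LEAST p. loose_path_from V F u w p) = n0"
  proof (rule Least_equality)
    show "loose_path_from V F u w n0" using p pn by simp
    fix q assume "loose_path_from V F u w q"
    then show "n0 \<le> q" unfolding n0_def by (intro Least_le loose_imp_reach)
  qed
  then show ?thesis unfolding hdist_def n0_def by simp
qed

lemma no_cross:
  assumes tree: "hypertree V E" and e: "e \<in> E" and a: "a \<in> e" and c: "c \<in> e" and ac: "a \<noteq> c"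
  shows "\<not> reach (E - {e}) a c n"
proof
  assume r: "reach (E - {e}) a c n"
  let ?F = "E - {e}"
  let ?P = "\<lambda>n. \<exists>a c. a \<in> e \<and> c \<in> e \<and> a \<noteq> c \<and> reach ?F a c n"
  define n0 where "n0 = (LEAST n. ?P n)"
  have P0: "?P n0" unfolding n0_def by (rule LeastI[of _ n]) (use a c ac r in blast)
  have min: "\<not> ?P m" if "m < n0" for m
    using not_less_Least[of m ?P] that unfolding n0_def by blast
  obtain a0 c0 where ac0: "a0 \<in> e" "c0 \<in> e" "a0 \<noteq> c0" "reach ?F a0 c0 n0" using P0 by blast
  obtain g h where g: "walk ?F n0 g h" "g 0 = a0" "g n0 = c0" using ac0(4) unfolding reach_def by blast
  have hF: "h i \<in> E" "h i \<noteq> e" "g i \<in> h i" "g (Suc i) \<in> h i" if "i < n0" for i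
    using g(1) that unfolding walk_def by auto
  have n0pos: "n0 > 0" using g ac0 by (cases n0) auto
  have sc: "\<not> reach ?F (g i) (g j) m" if "i \<le> j" "j \<le> n0" "i + m + (n0 - j) < n0" for i j m
  proof
    assume "reach ?F (g i) (g j) m"
    from shortcut[OF g(1) that(1,2) this] have "reach ?F a0 c0 (i + m + (n0 - j))" using g by simp
    then show False using min[OF that(3)] ac0 by blast
  qed
  have injg: "inj_on g {0..<Suc n0}"
  proof (rule inj_onI, rule ccontr)
    fix i j assume ij: "i \<in> {0..<Suc n0}" "j \<in> {0..<Suc n0}" "g i = g j" "i \<noteq> j"
    have "\<exists>a b. a < b \<and> b \<le> n0 \<and> g a = g b" using ij
      by (metis atLeastLessThan_iff less_Suc_eq_le linorder_neqE_nat)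
    then obtain a b where ab: "a < b" "b \<le> n0" "g a = g b" by blast
    have "reach ?F (g a) (g b) 0" using ab by (simp add: reach_0_iff)
    moreover have "a + 0 + (n0 - b) < n0" using ab by auto
    ultimately show False using sc[of a b 0] ab by simp
  qed
  have injh: "inj_on h {0..<n0}"
  proof (rule inj_onI, rule ccontr)
    fix i j assume ij: "i \<in> {0..<n0}" "j \<in> {0..<n0}" "h i = h j" "i \<noteq> j"
    have "\<exists>a b. a < b \<and> b < n0 \<and> h a = h b" using ij
      by (metis atLeastLessThan_iff linorder_neqE_nat)
    then obtain a b where ab: "a < b" "b < n0" "h a = h b" by blast
    have "reach ?F (g a) (g (Suc b)) 1"
      using hF[of a] hF[of b] ab by (intro reach_edge[of "h b"]) auto
    moreover have "a + 1 + (n0 - Suc b) < n0" using ab by auto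
    ultimately show False using sc[of a "Suc b" 1] ab by simp
  qed
  have disj: "h i \<inter> h j = {}" if "i < n0" "j < n0" "i + 1 < j" for i j
  proof (rule ccontr)
    assume "h i \<inter> h j \<noteq> {}"
    then obtain y where y: "y \<in> h i" "y \<in> h j" by blast
    have "reach ?F (g i) y 1" using hF[of i] that y by (intro reach_edge[of "h i"]) auto
    moreover have "reach ?F y (g (Suc j)) 1" using hF[of j] that y by (intro reach_edge[of "h j"]) auto
    ultimately have "reach ?F (g i) (g (Suc j)) (1 + 1)" by (rule reach_trans)
    moreover have "i + (1 + 1) + (n0 - Suc j) < n0" using that by auto
    ultimately show False using sc[of i "Suc j" "1+1"] that by auto
  qed
  have disje: "h i \<inter> e = {}" if "0 < i" "i + 1 < n0" for i
  proof (rule ccontr)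
    assume "h i \<inter> e \<noteq> {}"
    then obtain y where y: "y \<in> h i" "y \<in> e" by blast
    show False
    proof (cases "y = a0")
      case True
      have "reach ?F a0 (g (Suc i)) 1" using hF[of i] that y True by (intro reach_edge[of "h i"]) auto
      moreover have "reach ?F (g (Suc i)) c0 (n0 - Suc i)" using walk_sub[OF g(1), of "Suc i" n0] that g by auto
      ultimately have "reach ?F a0 c0 (1 + (n0 - Suc i))" by (rule reach_trans)
      moreover have "1 + (n0 - Suc i) < n0" using that by auto
      ultimately show False using min ac0 by blast
    next
      case False
      have "reach ?F a0 (g i) (i - 0)" using walk_sub[OF g(1), of 0 i] that g by auto
      moreover have "reach ?F (g i) y 1" using hF[of i] that y by (intro reach_edge[of "h i"]) auto
      ultimately have "reach ?F a0 y (i - 0 + 1)" by (rule reach_trans)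
      moreover have "i - 0 + 1 < n0" using that by auto
      ultimately show False using min ac0 y False by blast
    qed
  qed
  have EV: "f \<subseteq> V" if "f \<in> E" for f using tree that unfolding hypertree_def hypergraph_def by auto
  have gV: "g k \<in> V" if "k \<le> n0" for k
  proof (cases "k < n0")
    case True then show ?thesis using hF EV by blast
  next
    case False
    then have k: "k = n0" using that by auto
    then show ?thesis using g(3) ac0(2) e EV by auto
  qed
  define vs where "vs = map g [0..<Suc n0]"
  define es where "es = map h [0..<n0] @ [e]"
  have les: "length es = Suc n0" "length vs = Suc n0" unfolding vs_def es_def by auto
  have esi: "es ! i = (if i < n0 then h i else e)" if "i < Suc n0" for i
    using that unfolding es_def by (auto simp: nth_append)
  have vsi: "vs ! i = g i" if "i < Suc n0" for i
    using that unfolding vs_def by (simp del: upt_Suc add: nth_map_upt)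
  have "loose_cycle V E vs es"
    unfolding loose_cycle_def les
  proof (intro conjI allI impI)
    show "2 \<le> Suc n0" using n0pos by simp
    show "Suc n0 = Suc n0" by simp
    show "set vs \<subseteq> V" unfolding vs_def using gV by auto
    show "set es \<subseteq> E" unfolding es_def using hF e by auto
    show "distinct vs" unfolding vs_def using injg by (simp del: upt_Suc add: distinct_map)
    have "e \<notin> h ` {0..<n0}" using hF(2) by (metis atLeastLessThan_iff imageE)
    then show "distinct es" unfolding es_def using injh by (simp del: upt_Suc add: distinct_map)
  next
    fix i assume i: "i < Suc n0"
    show "vs ! i \<in> es ! i"
    proof (cases "i < n0")
      case True then show ?thesis using hF esi vsi by auto
    next
      case False then have "i = n0" using i by auto
      then show ?thesis using g ac0 esi vsi by auto
    qed
    show "vs ! (Suc i mod Suc n0) \<in> es ! i"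
    proof (cases "i < n0")
      case True
      then show ?thesis using hF vsi esi by auto
    next
      case False
      then have "i = n0" using i by auto
      then show ?thesis using vsi esi g ac0 by auto
    qed
  next
    fix i j assume ij: "i < Suc n0" "j < Suc n0"
      "i \<noteq> j \<and> Suc i mod Suc n0 \<noteq> j \<and> Suc j mod Suc n0 \<noteq> i"
    show "es ! i \<inter> es ! j = {}"
    proof (cases "i < n0")
      case i: True
      show ?thesis
      proof (cases "j < n0")
        case True
        then show ?thesis using i ij disj[of i j] disj[of j i] esi
          by (metis Int_commute Suc_eq_plus1 Suc_lessI mod_less not_less_iff_gr_or_eq)
      next
        case False
        then have "j = n0" using ij by auto
        then have "0 < i" "i + 1 < n0" using ij i by auto
        then show ?thesis using disje esi i \<open>j = n0\<close> by auto
      qed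
    next
      case False
      then have "i = n0" using ij by auto
      then have "j < n0" "0 < j" "j + 1 < n0" using ij by auto
      then show ?thesis using disje esi \<open>i = n0\<close> by (simp add: Int_commute)
    qed
  qed
  then show False using tree unfolding hypertree_def by blast
qed

lemma last_use:
  assumes "reach E a w n"
  shows "reach (E - {e}) a w n \<or> (\<exists>c\<in>e. \<exists>m<n. reach (E - {e}) c w m)"
  using assms
proof (induction n arbitrary: a)
  case 0
  then show ?case by (simp add: reach_0_iff)
next
  case (Suc n)
  obtain f y where fy: "f \<in> E" "a \<in> f" "y \<in> f" "reach E y w n" using reach_Suc[OF Suc.prems] by blast
  from Suc.IH[OF fy(4)] show ?case
  proof
    assume r: "reach (E - {e}) y w n"
    show ?case
    proof (cases "f = e")
      case True then show ?thesis using r fy by blast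
    next
      case False
      then have "reach (E - {e}) a y 1" using fy by (intro reach_edge[of f]) auto
      from reach_trans[OF this r] show ?thesis by simp
    qed
  next
    assume "\<exists>c\<in>e. \<exists>m<n. reach (E - {e}) c w m"
    then show ?case using less_Suc_eq by blast
  qed
qed

lemma tree_hg: "hypertree V E \<Longrightarrow> hypergraph V E"
  unfolding hypertree_def by simp

lemma tree_EV: "hypertree V E \<Longrightarrow> e \<in> E \<Longrightarrow> e \<subseteq> V"
  unfolding hypertree_def hypergraph_def by auto

lemma tree_conn: "hypertree V E \<Longrightarrow> u \<in> V \<Longrightarrow> w \<in> V \<Longrightarrow> \<exists>n. reach E u w n"
  unfolding hypertree_def hconnected_def using loose_imp_reach by metis

lemma hdist_least:
  assumes "hypertree V E" "u \<in> V" "w \<in> V"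
  shows "hdist V E u w = (LEAST n. reach E u w n)"
  using tree_conn[OF assms] hdist_eq[OF tree_hg[OF assms(1)] _ assms(2)] by blast

lemma hdist_reach:
  assumes "hypertree V E" "u \<in> V" "w \<in> V"
  shows "reach E u w (hdist V E u w)"
  unfolding hdist_least[OF assms] using tree_conn[OF assms] by (metis LeastI)

lemma hdist_le:
  assumes "hypertree V E" "u \<in> V" "w \<in> V" "reach E u w n"
  shows "hdist V E u w \<le> n"
  unfolding hdist_least[OF assms(1-3)] using assms(4) by (rule Least_le)

lemma hdist_sym:
  assumes "hypertree V E" "u \<in> V" "w \<in> V"
  shows "hdist V E w u = hdist V E u w"
proof -
  have "(\<lambda>n. reach E w u n) = (\<lambda>n. reach E u w n)" by (intro ext iffI) (erule reach_rev)+
  then show ?thesis unfolding hdist_least[OF assms] hdist_least[OF assms(1,3,2)] by simp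
qed

lemma adj_le:
  assumes tree: "hypertree V E" and e: "e \<in> E" and a: "a \<in> e" and b: "b \<in> e" and w: "w \<in> V"
  shows "hdist V E a w \<le> hdist V E b w + 1"
proof -
  have V: "a \<in> V" "b \<in> V" using tree_EV[OF tree e] a b by auto
  have "reach E a b 1" using e a b by (rule reach_edge)
  from reach_trans[OF this hdist_reach[OF tree V(2) w]]
  have "reach E a w (1 + hdist V E b w)" .
  then show ?thesis using hdist_le[OF tree V(1) w] by fastforce
qed

lemma exists_comp:
  assumes tree: "hypertree V E" and e: "e \<in> E" and a: "a \<in> e" and w: "w \<in> V"
  shows "\<exists>c\<in>e. \<exists>m. reach (E - {e}) c w m"
proof -
  have "a \<in> V" using tree_EV[OF tree e] a by auto
  then obtain n where "reach E a w n" using tree_conn[OF tree _ w] by blast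
  from last_use[OF this, of e] show ?thesis using a by blast
qed

lemma dL:
  assumes tree: "hypertree V E" and e: "e \<in> E" and a: "a \<in> e" and c: "c \<in> e" and ac: "a \<noteq> c"
    and w: "w \<in> V" and r: "reach (E - {e}) c w m"
  shows "hdist V E a w = hdist V E c w + 1"
proof -
  have V: "a \<in> V" "c \<in> V" using tree_EV[OF tree e] a c by auto
  have le: "hdist V E a w \<le> hdist V E c w + 1" by (rule adj_le[OF tree e a c w])
  have ra: "reach E a w (hdist V E a w)" by (rule hdist_reach[OF tree V(1) w])
  from last_use[OF ra, of e] have "hdist V E c w + 1 \<le> hdist V E a w"
  proof
    assume "reach (E - {e}) a w (hdist V E a w)"
    from reach_trans[OF this reach_rev[OF r]] have "reach (E - {e}) a c (hdist V E a w + m)" .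
    then show ?thesis using no_cross[OF tree e a c ac] by blast
  next
    assume "\<exists>c'\<in>e. \<exists>m'<hdist V E a w. reach (E - {e}) c' w m'"
    then obtain c' m' where c': "c' \<in> e" "m' < hdist V E a w" "reach (E - {e}) c' w m'" by blast
    have "c' = c"
    proof (rule ccontr)
      assume "c' \<noteq> c"
      from reach_trans[OF c'(3) reach_rev[OF r]] have "reach (E - {e}) c' c (m' + m)" .
      then show False using no_cross[OF tree e c'(1) c \<open>c' \<noteq> c\<close>] by blast
    qed
    then have "reach E c w m'" using c'(3) reach_mono[of "E - {e}" E] by blast
    then have "hdist V E c w \<le> m'" by (rule hdist_le[OF tree V(2) w])
    then show ?thesis using c'(2) by simp
  qed
  then show ?thesis using le by simp
qed

lemma comp_char:
  assumes tree: "hypertree V E" and c: "c \<in> V"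
  shows "comp_minus_edge V E e c = {w\<in>V. \<exists>m. reach (E - {e}) c w m}"
proof -
  have "(\<exists>p. loose_path_from V (E - {e}) c w p) \<longleftrightarrow> (\<exists>m. reach (E - {e}) c w m)" for w
  proof
    assume "\<exists>p. loose_path_from V (E - {e}) c w p"
    then obtain p where "loose_path_from V (E - {e}) c w p" by blast
    then show "\<exists>m. reach (E - {e}) c w m" using loose_imp_reach by metis
  next
    assume "\<exists>m. reach (E - {e}) c w m"
    then obtain m where "reach (E - {e}) c w m" by blast
    from reach_imp_loose[OF tree_hg[OF tree] _ c this] show "\<exists>p. loose_path_from V (E - {e}) c w p" by blast
  qed
  then show ?thesis unfolding comp_minus_edge_def by simp
qed

lemma key:
  assumes tree: "hypertree V E" and eig: "dist_eigenpair V E r x"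
    and e: "e \<in> E" and a: "a \<in> e" and b: "b \<in> e" and ab: "a \<noteq> b"
  defines "Ca \<equiv> comp_minus_edge V E e a" and "Cb \<equiv> comp_minus_edge V E e b"
    and "A \<equiv> {w\<in>V. hdist V E w a = hdist V E w b}"
  shows "Ca \<inter> Cb = {}" "A = V - Ca - Cb"
    "r * (x a - x b) = sigma x Cb - sigma x Ca"
    "sigma x V = sigma x Ca + sigma x Cb + sigma x A"
proof -
  have V: "a \<in> V" "b \<in> V" using tree_EV[OF tree e] a b by auto
  have fin: "finite V" using tree_hg[OF tree] unfolding hypergraph_def by simp
  have Ca: "Ca = {w\<in>V. \<exists>m. reach (E - {e}) a w m}" unfolding Ca_def by (rule comp_char[OF tree V(1)])
  have Cb: "Cb = {w\<in>V. \<exists>m. reach (E - {e}) b w m}" unfolding Cb_def by (rule comp_char[OF tree V(2)])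
  have p1: "hdist V E b w = hdist V E a w + 1" if "w \<in> Ca" for w
    using that dL[OF tree e b a ab[symmetric]] unfolding Ca by blast
  have p2: "hdist V E a w = hdist V E b w + 1" if "w \<in> Cb" for w
    using that dL[OF tree e a b ab] unfolding Cb by blast
  have p3: "hdist V E a w = hdist V E b w" if "w \<in> V" "w \<notin> Ca" "w \<notin> Cb" for w
  proof -
    obtain c m where c1: "c \<in> e" and c2: "reach (E - {e}) c w m" using exists_comp[OF tree e a \<open>w \<in> V\<close>] by blast
    have "c \<noteq> a" "c \<noteq> b" using that c1 c2 unfolding Ca Cb by auto
    then show ?thesis using dL[OF tree e a c1 _ \<open>w \<in> V\<close> c2] dL[OF tree e b c1 _ \<open>w \<in> V\<close> c2] by auto
  qed
  have nd: False if "w \<in> Ca" "w \<in> Cb" for w using p1[OF that(1)] p2[OF that(2)] by simp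
  show disj: "Ca \<inter> Cb = {}" using nd by blast
  have CV: "Ca \<subseteq> V" "Cb \<subseteq> V" unfolding Ca Cb by auto
  show AV: "A = V - Ca - Cb"
  proof -
    have "w \<in> A \<longleftrightarrow> w \<in> V - Ca - Cb" for w
    proof (cases "w \<in> V")
      case True
      then have hh: "hdist V E w a = hdist V E a w" "hdist V E w b = hdist V E b w"
        using hdist_sym[OF tree V(1)] hdist_sym[OF tree V(2)] by auto
      show ?thesis
      proof (cases "w \<in> Ca")
        case True then show ?thesis unfolding A_def using p1[OF True] hh by simp
      next
        case nCa: False
        show ?thesis
        proof (cases "w \<in> Cb")
          case True then show ?thesis unfolding A_def using p2[OF True] hh by simp
        next
          case False then show ?thesis unfolding A_def using p3[OF \<open>w \<in> V\<close> nCa False] hh \<open>w \<in> V\<close> nCa by simp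
        qed
      qed
    qed (simp add: A_def)
    then show ?thesis by blast
  qed
  have ev: "(\<Sum>v\<in>V. real (hdist V E u v) * x v) = r * x u" if "u \<in> V" for u
    using eig that unfolding dist_eigenpair_def by blast
  have "r * (x a - x b) = (\<Sum>v\<in>V. (real (hdist V E a v) - real (hdist V E b v)) * x v)"
    using ev[OF V(1)] ev[OF V(2)] by (simp add: right_diff_distrib left_diff_distrib sum_subtractf)
  also have "\<dots> = (\<Sum>v\<in>V. (if v \<in> Cb then x v else 0) - (if v \<in> Ca then x v else 0))"
  proof (rule sum.cong[OF refl])
    fix v assume v: "v \<in> V"
    show "(real (hdist V E a v) - real (hdist V E b v)) * x v =
      (if v \<in> Cb then x v else 0) - (if v \<in> Ca then x v else 0)"
    proof (cases "v \<in> Ca")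
      case True
      then have "v \<notin> Cb" using disj by auto
      then show ?thesis using p1[OF True] True by simp
    next
      case False
      then show ?thesis using p2 p3[OF v False] by (cases "v \<in> Cb") auto
    qed
  qed
  also have "\<dots> = sigma x Cb - sigma x Ca"
    unfolding sigma_def sum_subtractf sum.inter_restrict[OF fin, symmetric]
    using CV by (simp add: Int_absorb1 Int_absorb2)
  finally show "r * (x a - x b) = sigma x Cb - sigma x Ca" .
  have "V = Ca \<union> Cb \<union> A" using AV CV by blast
  moreover have "finite Ca" "finite Cb" "finite A" using CV fin AV by (auto intro: finite_subset)
  moreover have "(Ca \<union> Cb) \<inter> A = {}" using AV by blast
  ultimately show "sigma x V = sigma x Ca + sigma x Cb + sigma x A"
    unfolding sigma_def using disj
    by (metis finite_UnI sum.union_disjoint)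
qed

lemma pend:
  fixes x :: "'a \<Rightarrow> real"
  assumes tree: "hypertree V E" and eig: "dist_eigenpair V E \<rho> x"
    and e: "e \<in> E" and u: "u \<in> e" and v: "v \<in> e" and uv: "u \<noteq> v"
    and ew: "e - {u, v} = {w}" and dw: "hdeg E w = 1"
  shows "\<rho> * (x u - x w) = x w - sigma x (comp_minus_edge V E e u)
    \<and> {y\<in>V. hdist V E y u = hdist V E y v} = {w}"
proof -
  have w: "w \<in> e" "w \<noteq> u" "w \<noteq> v" using ew by auto
  have wV: "w \<in> V" using tree_EV[OF tree e] w by auto
  have Ew: "{f\<in>E. w \<in> f} = {e}"
  proof -
    have "card {f\<in>E. w \<in> f} = 1" using dw unfolding hdeg_def .
    then have "card {f\<in>E. w \<in> f} = Suc 0" by simp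
    then obtain f where f: "{f\<in>E. w \<in> f} = {f}" unfolding card_1_singleton_iff by blast
    moreover have "e \<in> {f\<in>E. w \<in> f}" using e w by blast
    ultimately show ?thesis by simp
  qed
  have Cw: "comp_minus_edge V E e w = {w}"
  proof -
    have yw: "y = w" if rr: "reach (E - {e}) w y m" for y m
    proof (cases m)
      case 0 then show ?thesis using rr by (simp add: reach_0_iff)
    next
      case (Suc m')
      have "reach (E - {e}) w y (Suc m')" using rr Suc by simp
      from reach_Suc[OF this] obtain f where "f \<in> E - {e}" "w \<in> f" by blast
      then show ?thesis using Ew by (metis (mono_tags, lifting) DiffE mem_Collect_eq singletonD)
    qed
    have r0: "reach (E - {e}) w w 0" by (rule reach_0)
    show ?thesis unfolding comp_char[OF tree wV]
    proof (rule set_eqI, rule iffI)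
      fix y assume "y \<in> {y \<in> V. \<exists>m. reach (E - {e}) w y m}"
      then obtain m where "reach (E - {e}) w y m" by blast
      then show "y \<in> {w}" using yw by blast
    next
      fix y assume "y \<in> {w}"
      then show "y \<in> {y \<in> V. \<exists>m. reach (E - {e}) w y m}" using wV r0 by blast
    qed
  qed
  note kw = key[OF tree eig e u w(1) w(2)[symmetric]]
  have s1: "\<rho> * (x u - x w) = x w - sigma x (comp_minus_edge V E e u)"
    using kw(3) Cw by (simp add: sigma_def)
  note kv = key[OF tree eig e v w(1) w(3)[symmetric]]
  note kuv = key[OF tree eig e u v uv]
  have "{y\<in>V. hdist V E y u = hdist V E y v} = {w}"
  proof -
    have "y \<in> V - comp_minus_edge V E e u - comp_minus_edge V E e v \<longleftrightarrow> y = w" for y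
    proof
      assume y: "y \<in> V - comp_minus_edge V E e u - comp_minus_edge V E e v"
      then obtain c m where c1: "c \<in> e" and c2: "reach (E - {e}) c y m"
        using exists_comp[OF tree e u] by blast
      have cV: "c \<in> V" using c1 tree_EV[OF tree e] by auto
      have "y \<in> comp_minus_edge V E e c" using c2 y unfolding comp_char[OF tree cV] by blast
      moreover have "c = u \<or> c = v \<or> c = w" using c1 ew by blast
      ultimately show "y = w" using y Cw by (metis DiffD1 DiffD2 singletonD)
    next
      assume "y = w"
      then show "y \<in> V - comp_minus_edge V E e u - comp_minus_edge V E e v"
        using wV kw(1) kv(1) Cw by auto
    qed
    then show ?thesis using kuv(2) by blast
  qed
  then show ?thesis using s1 by simp
qed

theorem lemma2p1:
  fixes V :: "'a set" and E :: "'a set set" and x :: "'a \<Rightarrow> real"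
    and e1 e2 :: "'a set" and u1 u2 v1 v2 w1 w2 :: 'a
  assumes tree: "hypertree V E"
    and perron: "dist_perron_vector V E x"
    and e1: "e1 \<in> E" and e2: "e2 \<in> E"
    and u1: "u1 \<in> e1" and v1: "v1 \<in> e1" and u2: "u2 \<in> e2" and v2: "v2 \<in> e2"
    and dist: "hdist V E u1 u2 = hdist V E v1 v2 + 2"
  defines "\<rho> \<equiv> dist_spectral_radius V E"
    and "T1 \<equiv> comp_minus_edge V E e1 u1"
    and "T2 \<equiv> comp_minus_edge V E e2 u2"
    and "A1 \<equiv> {w\<in>V. hdist V E w u1 = hdist V E w v1}"
    and "A2 \<equiv> {w\<in>V. hdist V E w u2 = hdist V E w v2}"
  shows "(\<rho> * (x u1 - x u2) - \<rho> * (x v1 - x v2)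
           = 2 * (sigma x T2 - sigma x T1) + sigma x A2 - sigma x A1)
    \<and> (e1 - {u1, v1} = {w1} \<and> hdeg E w1 = 1 \<and>
         e2 - {u2, v2} = {w2} \<and> hdeg E w2 = 1 \<longrightarrow>
           (\<rho> + 1) * (x w1 - x w2) - \<rho> * (x v1 - x v2)
             = x w2 - x w1 + sigma x T2 - sigma x T1
           \<and> \<rho> * (x u1 - x u2) - (\<rho> + 1) * (x w1 - x w2)
             = sigma x T2 - sigma x T1)"
proof -
  have hg: "hypergraph V E" using tree_hg[OF tree] .
  have eig: "dist_eigenpair V E \<rho> x" using perron unfolding dist_perron_vector_def \<rho>_def by blast
  have Vu: "u1 \<in> V" "v1 \<in> V" "u2 \<in> V" "v2 \<in> V" using tree_EV[OF tree e1] tree_EV[OF tree e2] u1 v1 u2 v2 by auto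
  have uv1: "u1 \<noteq> v1"
  proof
    assume "u1 = v1"
    have "hdist V E u2 u1 \<le> hdist V E v2 u1 + 1" by (rule adj_le[OF tree e2 u2 v2 Vu(1)])
    then show False using dist \<open>u1 = v1\<close> hdist_sym[OF tree Vu(1) Vu(3)] hdist_sym[OF tree Vu(1) Vu(4)] by simp
  qed
  have uv2: "u2 \<noteq> v2"
  proof
    assume "u2 = v2"
    have "hdist V E u1 u2 \<le> hdist V E v1 u2 + 1" by (rule adj_le[OF tree e1 u1 v1 Vu(3)])
    then show False using dist \<open>u2 = v2\<close> by simp
  qed
  note k1 = key[OF tree eig e1 u1 v1 uv1]
  note k2 = key[OF tree eig e2 u2 v2 uv2]
  have part1: "\<rho> * (x u1 - x u2) - \<rho> * (x v1 - x v2)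
           = 2 * (sigma x T2 - sigma x T1) + sigma x A2 - sigma x A1"
  proof -
    have "\<rho> * (x u1 - x u2) - \<rho> * (x v1 - x v2) = \<rho> * (x u1 - x v1) - \<rho> * (x u2 - x v2)"
      by (simp add: algebra_simps)
    also have "\<dots> = (sigma x (comp_minus_edge V E e1 v1) - sigma x T1) - (sigma x (comp_minus_edge V E e2 v2) - sigma x T2)"
      using k1(3)[folded T1_def A1_def] k2(3)[folded T2_def A2_def] by simp
    finally have "\<rho> * (x u1 - x u2) - \<rho> * (x v1 - x v2) = sigma x (comp_minus_edge V E e1 v1) - sigma x T1 - (sigma x (comp_minus_edge V E e2 v2) - sigma x T2)" .
    moreover note k1(4)[folded T1_def A1_def] k2(4)[folded T2_def A2_def]
    ultimately show ?thesis by argo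
  qed
  show ?thesis
  proof (intro conjI impI)
    show "\<rho> * (x u1 - x u2) - \<rho> * (x v1 - x v2)
           = 2 * (sigma x T2 - sigma x T1) + sigma x A2 - sigma x A1" by (rule part1)
  next
    assume H: "e1 - {u1, v1} = {w1} \<and> hdeg E w1 = 1 \<and> e2 - {u2, v2} = {w2} \<and> hdeg E w2 = 1"
    have H1: "e1 - {u1, v1} = {w1}" using H by (rule conjunct1)
    have H2: "hdeg E w1 = 1" using H by (metis conjunct1 conjunct2)
    have H3: "e2 - {u2, v2} = {w2}" using H by (metis conjunct1 conjunct2)
    have H4: "hdeg E w2 = 1" using H by (metis conjunct2)
    have q1: "\<rho> * (x u1 - x w1) = x w1 - sigma x T1 \<and> A1 = {w1}"
      unfolding T1_def A1_def by (rule pend[OF tree eig e1 u1 v1 uv1 H1 H2])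
    have q2: "\<rho> * (x u2 - x w2) = x w2 - sigma x T2 \<and> A2 = {w2}"
      unfolding T2_def A2_def by (rule pend[OF tree eig e2 u2 v2 uv2 H3 H4])
    have sA: "sigma x A1 = x w1" "sigma x A2 = x w2" using q1 q2 by (simp_all add: sigma_def)
    have r1: "\<rho> * (x u1 - x w1) = x w1 - sigma x T1" "\<rho> * (x u2 - x w2) = x w2 - sigma x T2"
      using q1 q2 by simp_all
    have "(\<rho> + 1) * (x w1 - x w2) - \<rho> * (x v1 - x v2) =
       (\<rho> * (x u1 - x u2) - \<rho> * (x v1 - x v2)) - (\<rho> * (x u1 - x w1) - \<rho> * (x u2 - x w2)) + (x w1 - x w2)"
      by (simp add: algebra_simps)
    then show "(\<rho> + 1) * (x w1 - x w2) - \<rho> * (x v1 - x v2) = x w2 - x w1 + sigma x T2 - sigma x T1"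
      using part1 r1 sA by argo
    have "\<rho> * (x u1 - x u2) - (\<rho> + 1) * (x w1 - x w2) =
       (\<rho> * (x u1 - x w1) - \<rho> * (x u2 - x w2)) - (x w1 - x w2)"
      by (simp add: algebra_simps)
    then show "\<rho> * (x u1 - x u2) - (\<rho> + 1) * (x w1 - x w2) = sigma x T2 - sigma x T1"
      using r1 by argo
  qed
qed

end
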